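(* Let $1\le m\le n$ be integers and $\sigma_1^2,\dots,\sigma_n^2>0$. The optimal value of the problem \[ \max_\eta\ \sum_{M\subset[n]:|M|=m}\Big(\sum_{l\in M}\eta_{M\setminus\{l\}}\sigma_l^2\Big)\,\mathrm{Ent}\big(\{\eta_{M\setminus\{l\}}\sigma_l^2\}_{l\in M}\big) \] subject to $\sum_{F\subset[n]:|F|=m-1}\eta_F=1$, $\eta_F\ge0$ for all $F\subset[n]$ with $|F|=m-1$, is at least $\frac13\sum_{j\in G^{m}}\sigma_j^2\ln(m)$.
   Context: For a nonnegative vector $a$, $\mathrm{Ent}(a)=-\sum_i\hat a_i\ln\hat a_i$ with $\hat a_i=a_i/\sum_ja_j$ and $0\ln 0=0$ (a term whose vector is identically zero contributes $0$). Let $\underline\sigma^2=\min_i\sigma_i^2$, $G_j=\{i\in[n]:2^{j-1}\le\sigma_i^2/\underline\sigma^2<2^j\}$ for $j=1,\dots,k$ covering $[n]$, and $G^{m}=\bigcup_{j:|G_j|>2m}G_j$. *)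

theory Defs
  imports Complex_Main
begin

definition Ent :: "'a set \<Rightarrow> ('a \<Rightarrow> real) \<Rightarrow> real" where
  "Ent I a = (let S = (\<Sum>j\<in>I. a j) in
     if S = 0 then 0
     else - (\<Sum>i\<in>I. if a i = 0 then 0 else (a i / S) * ln (a i / S)))"

definition sigmin :: "nat \<Rightarrow> (nat \<Rightarrow> real) \<Rightarrow> real" where
  "sigmin n s = Min (s ` {1..n})"

definition Grp :: "nat \<Rightarrow> (nat \<Rightarrow> real) \<Rightarrow> nat \<Rightarrow> nat set" where
  "Grp n s j = {i \<in> {1..n}. 2 ^ (j - 1) \<le> s i / sigmin n s \<and> s i / sigmin n s < 2 ^ j}"

definition Gbig :: "nat \<Rightarrow> (nat \<Rightarrow> real) \<Rightarrow> nat \<Rightarrow> nat set" where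
  "Gbig n s m = (\<Union>j \<in> {j. 1 \<le> j \<and> card (Grp n s j) > 2 * m}. Grp n s j)"

definition objective :: "nat \<Rightarrow> nat \<Rightarrow> (nat \<Rightarrow> real) \<Rightarrow> (nat set \<Rightarrow> real) \<Rightarrow> real" where
  "objective n m s \<eta> =
     (\<Sum>M \<in> {M. M \<subseteq> {1..n} \<and> card M = m}.
        (\<Sum>l\<in>M. \<eta> (M - {l}) * s l) * Ent M (\<lambda>l. \<eta> (M - {l}) * s l))"

definition feasible :: "nat \<Rightarrow> nat \<Rightarrow> (nat set \<Rightarrow> real) \<Rightarrow> bool" where
  "feasible n m \<eta> \<longleftrightarrow>
     (\<Sum>F \<in> {F. F \<subseteq> {1..n} \<and> card F = m - 1}. \<eta> F) = 1 \<and>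
     (\<forall>F. F \<subseteq> {1..n} \<and> card F = m - 1 \<longrightarrow> \<eta> F \<ge> 0)"

end

theory Submission
  imports Defs
begin

lemma Ent_nonneg:
  assumes "finite I" "\<And>i. i \<in> I \<Longrightarrow> a i \<ge> 0"
  shows "Ent I a \<ge> 0"
proof -
  let ?S = "\<Sum>j\<in>I. a j"
  show ?thesis
  proof (cases "?S = 0")
    case True then show ?thesis by (simp add: Ent_def)
  next
    case False
    have Spos: "?S > 0" using False sum_nonneg[of I a] assms(2) by force
    have "(\<Sum>i\<in>I. if a i = 0 then 0 else (a i / ?S) * ln (a i / ?S)) \<le> 0"
    proof (rule sum_nonpos)
      fix i assume i: "i \<in> I"
      show "(if a i = 0 then 0 else (a i / ?S) * ln (a i / ?S)) \<le> 0"
      proof (cases "a i = 0")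
        case False
        have ai: "a i > 0" using False assms(2)[OF i] by linarith
        have "a i \<le> ?S" using member_le_sum[of i I a] i assms by auto
        then have "a i / ?S \<le> 1" using Spos by simp
        then have "ln (a i / ?S) \<le> 0" using ai Spos by simp
        then have "(a i / ?S) * ln (a i / ?S) \<le> 0" using ai Spos by (intro mult_nonneg_nonpos) auto
        then show ?thesis using False by simp
      qed simp
    qed
    then show ?thesis using False by (simp add: Ent_def Let_def)
  qed
qed

lemma Ent_cong:
  assumes "\<And>i. i \<in> I \<Longrightarrow> a i = b i"
  shows "Ent I a = Ent I b"
proof -
  have e: "sum a I = sum b I" using assms by (rule sum.cong[OF refl])
  have e2: "(\<Sum>i\<in>I. if a i = 0 then 0 else (a i / S) * ln (a i / S)) =
     (\<Sum>i\<in>I. if b i = 0 then 0 else (b i / S) * ln (b i / S))" for S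
    using assms by (intro sum.cong) auto
  show ?thesis unfolding Ent_def Let_def e e2 ..
qed

lemma Ent_const:
  assumes "finite I" "I \<noteq> {}" "c > 0"
  shows "Ent I (\<lambda>_. c) = ln (real (card I))"
proof -
  have cI: "card I > 0" using assms by (simp add: card_gt_0_iff)
  have "Ent I (\<lambda>_. c) = - (real (card I) * ((c / (real (card I) * c)) * ln (c / (real (card I) * c))))"
    using assms cI by (simp add: Ent_def Let_def)
  also have "c / (real (card I) * c) = 1 / real (card I)" using assms by simp
  finally show ?thesis using cI by (simp add: ln_div)
qed


lemma card_swap:
  assumes "finite F" "a \<in> F" "b \<notin> F"
  shows "card (insert b (F - {a})) = card F"
proof -
  have "card F > 0" using assms card_gt_0_iff by blast
  then show ?thesis using assms by (simp add: card_Diff_singleton)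
qed

lemma swap_bound:
  fixes s :: "nat \<Rightarrow> real" and U G :: "nat set"
  assumes finU: "finite U" and GU: "G \<subseteq> U" and iG: "i \<in> G" and cG: "card G > 2 * m"
    and rat: "\<And>k. k \<in> G \<Longrightarrow> s i \<le> 2 * s k" and pos: "\<And>x. x \<in> U \<Longrightarrow> s x > 0"
    and m1: "m \<ge> 1"
  shows "(\<Sum>F\<in>{F \<in> {F. F \<subseteq> U \<and> card F = m - 1}. i \<in> F}. prod s F)
     \<le> 2 * (\<Sum>F\<in>{F \<in> {F. F \<subseteq> U \<and> card F = m - 1}. i \<notin> F}. prod s F)"
proof -
  define A where "A = {F \<in> {F. F \<subseteq> U \<and> card F = m - 1}. i \<in> F}"
  define B where "B = {F \<in> {F. F \<subseteq> U \<and> card F = m - 1}. i \<notin> F}"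
  have finA: "finite A" unfolding A_def by (rule finite_subset[of _ "Pow U"]) (use finU in auto)
  have finB: "finite B" unfolding B_def by (rule finite_subset[of _ "Pow U"]) (use finU in auto)
  have finG: "finite G" using finU GU finite_subset by blast
  have prodnn: "prod s F \<ge> 0" if "F \<subseteq> U" for F
    using that pos by (intro prod_nonneg) (auto intro: less_imp_le)
  have step1: "prod s F * real (m + 2) \<le> (\<Sum>k\<in>G - F. 2 * prod s (insert k (F - {i})))" if F: "F \<in> A" for F
  proof -
    have FU: "F \<subseteq> U" and cF: "card F = m - 1" and iF: "i \<in> F" using F by (auto simp: A_def)
    have finF: "finite F" using FU finU finite_subset by blast
    have "card G - card F \<le> card (G - F)" by (rule diff_card_le_card_Diff[OF finF])
    then have cGF: "m + 2 \<le> card (G - F)" using cF cG m1 by linarith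
    have pF: "prod s F = s i * prod s (F - {i})" using prod.remove[OF finF iF] .
    have pnn: "prod s (F - {i}) \<ge> 0" using prodnn[of "F - {i}"] FU by auto
    have "prod s F * real (m + 2) \<le> prod s F * real (card (G - F))"
      using cGF prodnn[OF FU] by (intro mult_left_mono) auto
    also have "\<dots> = (\<Sum>k\<in>G - F. prod s F)" by simp
    also have "\<dots> \<le> (\<Sum>k\<in>G - F. 2 * prod s (insert k (F - {i})))"
    proof (rule sum_mono)
      fix k assume k: "k \<in> G - F"
      have "prod s (insert k (F - {i})) = s k * prod s (F - {i})"
        using k finF by (intro prod.insert) auto
      then show "prod s F \<le> 2 * prod s (insert k (F - {i}))"
        proof -
        have "s i * prod s (F - {i}) \<le> (2 * s k) * prod s (F - {i})"
          using rat[of k] k pnn by (intro mult_right_mono) auto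
        then show ?thesis using pF \<open>prod s (insert k (F - {i})) = s k * prod s (F - {i})\<close> by (simp add: mult.assoc)
      qed
    qed
    finally show ?thesis .
  qed
  have step2: "(\<Sum>F\<in>A. \<Sum>k\<in>G - F. prod s (insert k (F - {i}))) = (\<Sum>F\<in>B. \<Sum>k\<in>F \<inter> G. prod s F)"
  proof -
    have "(\<Sum>F\<in>A. \<Sum>k\<in>G - F. prod s (insert k (F - {i}))) = (\<Sum>(F,k)\<in>Sigma A (\<lambda>F. G - F). prod s (insert k (F - {i})))"
      using finA finG by (intro sum.Sigma) auto
    also have "\<dots> = (\<Sum>(F,k)\<in>Sigma B (\<lambda>F. F \<inter> G). prod s F)"
    proof (rule sum.reindex_bij_witness[where i = "\<lambda>(F,k). (insert i (F - {k}), k)" and j = "\<lambda>(F,k). (insert k (F - {i}), k)"])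
      fix a assume a: "a \<in> Sigma A (\<lambda>F. G - F)"
      obtain F k where ak: "a = (F, k)" by (cases a)
      have FU: "F \<subseteq> U" and cF: "card F = m - 1" and iF: "i \<in> F" and kG: "k \<in> G" and kF: "k \<notin> F"
        using a ak by (auto simp: A_def)
      have finF: "finite F" using FU finU finite_subset by blast
      have ki: "k \<noteq> i" using iF kF by auto
      show "(case (case a of (F, k) \<Rightarrow> (insert k (F - {i}), k)) of (F, k) \<Rightarrow> (insert i (F - {k}), k)) = a"
        using ak iF kF ki by auto
      have "card (insert k (F - {i})) = m - 1"
        using card_swap[OF finF iF kF] cF by simp
      then show "(case a of (F, k) \<Rightarrow> (insert k (F - {i}), k)) \<in> Sigma B (\<lambda>F. F \<inter> G)"
        using ak FU kG GU ki by (auto simp: B_def)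
      show "(case (case a of (F, k) \<Rightarrow> (insert k (F - {i}), k)) of (F, k) \<Rightarrow> prod s F) =
            (case a of (F, k) \<Rightarrow> prod s (insert k (F - {i})))" using ak by simp
    next
      fix b assume b: "b \<in> Sigma B (\<lambda>F. F \<inter> G)"
      obtain F k where bk: "b = (F, k)" by (cases b)
      have FU: "F \<subseteq> U" and cF: "card F = m - 1" and iF: "i \<notin> F" and kG: "k \<in> G" and kF: "k \<in> F"
        using b bk by (auto simp: B_def)
      have finF: "finite F" using FU finU finite_subset by blast
      have ki: "k \<noteq> i" using iF kF by auto
      show "(case (case b of (F, k) \<Rightarrow> (insert i (F - {k}), k)) of (F, k) \<Rightarrow> (insert k (F - {i}), k)) = b"
        using bk iF kF ki by auto
      have "card (insert i (F - {k})) = m - 1"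
        using card_swap[OF finF kF iF] cF by simp
      then show "(case b of (F, k) \<Rightarrow> (insert i (F - {k}), k)) \<in> Sigma A (\<lambda>F. G - F)"
        using bk FU kG GU ki iG iF by (auto simp: A_def)
    qed
    also have "\<dots> = (\<Sum>F\<in>B. \<Sum>k\<in>F \<inter> G. prod s F)"
      using finB finG by (intro sum.Sigma[symmetric]) auto
    finally show ?thesis .
  qed
  have step3: "(\<Sum>F\<in>B. \<Sum>k\<in>F \<inter> G. prod s F) \<le> (\<Sum>F\<in>B. real (m + 2) * prod s F)"
  proof (rule sum_mono)
    fix F assume F: "F \<in> B"
    have FU: "F \<subseteq> U" and cF: "card F = m - 1" using F by (auto simp: B_def)
    have finF: "finite F" using FU finU finite_subset by blast
    have "card (F \<inter> G) \<le> m + 2" using card_mono[OF finF, of "F \<inter> G"] cF by auto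
    then show "(\<Sum>k\<in>F \<inter> G. prod s F) \<le> real (m + 2) * prod s F"
      using prodnn[OF FU] by (simp add: mult_right_mono)
  qed
  have "(\<Sum>F\<in>A. prod s F) * real (m + 2) = (\<Sum>F\<in>A. prod s F * real (m + 2))"
    by (simp add: sum_distrib_right)
  also have "\<dots> \<le> (\<Sum>F\<in>A. \<Sum>k\<in>G - F. 2 * prod s (insert k (F - {i})))"
    using step1 by (rule sum_mono)
  also have "\<dots> = 2 * (\<Sum>F\<in>A. \<Sum>k\<in>G - F. prod s (insert k (F - {i})))"
    by (simp add: sum_distrib_left)
  also have "\<dots> \<le> 2 * (\<Sum>F\<in>B. real (m + 2) * prod s F)" using step2 step3 by simp
  also have "\<dots> = (2 * (\<Sum>F\<in>B. prod s F)) * real (m + 2)"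
    by (simp add: sum_distrib_left mult_ac)
  finally have "(\<Sum>F\<in>A. prod s F) * real (m + 2) \<le> (2 * (\<Sum>F\<in>B. prod s F)) * real (m + 2)" .
  then show ?thesis unfolding A_def B_def by simp
qed


lemma count_identity:
  fixes s :: "nat \<Rightarrow> real"
  assumes finU: "finite U" and m1: "m \<ge> 1"
  shows "(\<Sum>M\<in>{M. M \<subseteq> U \<and> card M = m}. real m * prod s M)
       = (\<Sum>F\<in>{F. F \<subseteq> U \<and> card F = m - 1}. \<Sum>l\<in>U - F. prod s F * s l)"
proof -
  define MU where "MU = {M. M \<subseteq> U \<and> card M = m}"
  define FU where "FU = {F. F \<subseteq> U \<and> card F = m - 1}"
  have finMU: "finite MU" unfolding MU_def by (rule finite_subset[of _ "Pow U"]) (use finU in auto)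
  have finFU: "finite FU" unfolding FU_def by (rule finite_subset[of _ "Pow U"]) (use finU in auto)
  have "(\<Sum>M\<in>MU. real m * prod s M) = (\<Sum>M\<in>MU. \<Sum>l\<in>M. prod s M)"
    by (intro sum.cong) (auto simp: MU_def)
  also have "\<dots> = (\<Sum>(M,l)\<in>Sigma MU (\<lambda>M. M). prod s M)"
    using finMU finU by (intro sum.Sigma) (auto simp: MU_def intro: finite_subset)
  also have "\<dots> = (\<Sum>(F,l)\<in>Sigma FU (\<lambda>F. U - F). prod s F * s l)"
  proof (rule sum.reindex_bij_witness[where i = "\<lambda>(F,l). (insert l F, l)" and j = "\<lambda>(M,l). (M - {l}, l)"])
    fix a assume a: "a \<in> Sigma MU (\<lambda>M. M)"
    obtain M l where al: "a = (M, l)" by (cases a)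
    have MU': "M \<subseteq> U" "card M = m" "l \<in> M" using a al by (auto simp: MU_def)
    have finM: "finite M" using MU' finU finite_subset by blast
    show "(case (case a of (M, l) \<Rightarrow> (M - {l}, l)) of (F, l) \<Rightarrow> (insert l F, l)) = a"
      using al MU' by auto
    show "(case a of (M, l) \<Rightarrow> (M - {l}, l)) \<in> Sigma FU (\<lambda>F. U - F)"
      using al MU' finM by (auto simp: FU_def card_Diff_singleton)
    have "prod s M = s l * prod s (M - {l})" using prod.remove[OF finM MU'(3)] .
    then show "(case (case a of (M, l) \<Rightarrow> (M - {l}, l)) of (F, l) \<Rightarrow> prod s F * s l) =
        (case a of (M, l) \<Rightarrow> prod s M)" using al by simp
  next
    fix b assume b: "b \<in> Sigma FU (\<lambda>F. U - F)"
    obtain F l where bl: "b = (F, l)" by (cases b)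
    have FU': "F \<subseteq> U" "card F = m - 1" "l \<in> U" "l \<notin> F" using b bl by (auto simp: FU_def)
    have finF: "finite F" using FU' finU finite_subset by blast
    show "(case (case b of (F, l) \<Rightarrow> (insert l F, l)) of (M, l) \<Rightarrow> (M - {l}, l)) = b"
      using bl FU' by auto
    show "(case b of (F, l) \<Rightarrow> (insert l F, l)) \<in> Sigma MU (\<lambda>M. M)"
      using bl FU' finF m1 by (auto simp: MU_def)
  qed
  also have "\<dots> = (\<Sum>F\<in>FU. \<Sum>l\<in>U - F. prod s F * s l)"
    using finFU finU by (intro sum.Sigma[symmetric]) auto
  finally show ?thesis unfolding MU_def FU_def .
qed

lemma main_ineq:
  fixes s :: "nat \<Rightarrow> real"
  assumes finU: "finite U" and m1: "m \<ge> 1" and pos: "\<And>x. x \<in> U \<Longrightarrow> s x > 0"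
    and grp: "\<And>i. i \<in> U \<Longrightarrow> \<exists>G. G \<subseteq> U \<and> i \<in> G \<and> card G > 2 * m \<and> (\<forall>k\<in>G. s i \<le> 2 * s k)"
  shows "(1/3) * (\<Sum>F\<in>{F. F \<subseteq> U \<and> card F = m - 1}. prod s F) * (\<Sum>j\<in>U. s j)
     \<le> (\<Sum>M\<in>{M. M \<subseteq> U \<and> card M = m}. real m * prod s M)"
proof -
  define FU where "FU = {F. F \<subseteq> U \<and> card F = m - 1}"
  define Z where "Z = (\<Sum>F\<in>FU. prod s F)"
  define S where "S = (\<Sum>j\<in>U. s j)"
  define A where "A i = (\<Sum>F\<in>{F \<in> FU. i \<in> F}. prod s F)" for i
  have finFU: "finite FU" unfolding FU_def by (rule finite_subset[of _ "Pow U"]) (use finU in auto)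
  have Ai: "A i \<le> (2/3) * Z" if i: "i \<in> U" for i
  proof -
    obtain G where G: "G \<subseteq> U" "i \<in> G" "card G > 2 * m" "\<forall>k\<in>G. s i \<le> 2 * s k" using grp[OF i] by blast
    have sb: "A i \<le> 2 * (\<Sum>F\<in>{F \<in> FU. i \<notin> F}. prod s F)"
      unfolding A_def FU_def by (rule swap_bound[OF finU G(1) G(2) G(3)]) (use G(4) pos m1 in auto)
    have "Z = (\<Sum>F\<in>FU. (if i \<in> F then prod s F else 0) + (if i \<notin> F then prod s F else 0))"
      unfolding Z_def by (intro sum.cong) auto
    also have "\<dots> = A i + (\<Sum>F\<in>{F \<in> FU. i \<notin> F}. prod s F)"
      unfolding A_def using finFU by (simp add: sum.distrib sum.inter_filter)
    finally show ?thesis using sb by linarith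
  qed
  have "(\<Sum>F\<in>FU. prod s F * (\<Sum>i\<in>F. s i)) = (\<Sum>F\<in>FU. \<Sum>i\<in>U. if i \<in> F then prod s F * s i else 0)"
  proof (intro sum.cong refl)
    fix F assume F: "F \<in> FU"
    have "F \<subseteq> U" using F by (auto simp: FU_def)
    then have "(\<Sum>i\<in>U. if i \<in> F then prod s F * s i else 0) = (\<Sum>i\<in>U \<inter> F. prod s F * s i)"
      using finU by (simp add: sum.inter_restrict)
    also have "U \<inter> F = F" using \<open>F \<subseteq> U\<close> by auto
    finally show "prod s F * (\<Sum>i\<in>F. s i) = (\<Sum>i\<in>U. if i \<in> F then prod s F * s i else 0)"
      by (simp add: sum_distrib_left)
  qed
  also have "\<dots> = (\<Sum>i\<in>U. \<Sum>F\<in>FU. if i \<in> F then prod s F * s i else 0)" by (rule sum.swap)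
  also have "\<dots> = (\<Sum>i\<in>U. s i * A i)"
    unfolding A_def using finFU by (intro sum.cong refl) (simp add: sum.inter_filter sum_distrib_left if_distrib mult.commute cong: if_cong)
  also have "\<dots> \<le> (\<Sum>i\<in>U. s i * ((2/3) * Z))"
    using Ai pos by (intro sum_mono mult_left_mono) (auto intro: less_imp_le)
  also have "\<dots> = (2/3) * Z * S" unfolding S_def by (metis mult.commute sum_distrib_right)
  finally have key: "(\<Sum>F\<in>FU. prod s F * (\<Sum>i\<in>F. s i)) \<le> (2/3) * Z * S" .
  have "(\<Sum>M\<in>{M. M \<subseteq> U \<and> card M = m}. real m * prod s M) = (\<Sum>F\<in>FU. \<Sum>l\<in>U - F. prod s F * s l)"
    unfolding FU_def by (rule count_identity[OF finU m1])
  also have "\<dots> = (\<Sum>F\<in>FU. prod s F * S - prod s F * (\<Sum>i\<in>F. s i))"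
  proof (intro sum.cong refl)
    fix F assume F: "F \<in> FU"
    have "F \<subseteq> U" using F by (auto simp: FU_def)
    then have "(\<Sum>l\<in>U - F. s l) = S - (\<Sum>i\<in>F. s i)" unfolding S_def using finU by (simp add: sum_diff)
    then show "(\<Sum>l\<in>U - F. prod s F * s l) = prod s F * S - prod s F * (\<Sum>i\<in>F. s i)"
      by (simp add: sum_distrib_left[symmetric] right_diff_distrib)
  qed
  also have "\<dots> = Z * S - (\<Sum>F\<in>FU. prod s F * (\<Sum>i\<in>F. s i))"
    unfolding Z_def by (simp add: sum_subtractf sum_distrib_right)
  finally show ?thesis using key unfolding FU_def[symmetric] Z_def[symmetric] S_def[symmetric] by linarith
qed


lemma sigmin_pos:
  assumes "1 \<le> n" "\<And>i. i \<in> {1..n} \<Longrightarrow> s i > 0"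
  shows "sigmin n s > 0"
proof -
  have "Min (s ` {1..n}) \<in> s ` {1..n}" using assms(1) by (intro Min_in) auto
  then show ?thesis using assms(2) unfolding sigmin_def by auto
qed

lemma Gbig_sub: "Gbig n s m \<subseteq> {1..n}"
  unfolding Gbig_def Grp_def by auto

lemma Gbig_grp:
  assumes n1: "1 \<le> n" and pos: "\<And>i. i \<in> {1..n} \<Longrightarrow> s i > 0" and i: "i \<in> Gbig n s m"
  shows "\<exists>G. G \<subseteq> Gbig n s m \<and> i \<in> G \<and> card G > 2 * m \<and> (\<forall>k\<in>G. s i \<le> 2 * s k)"
proof -
  obtain j where j: "1 \<le> j" "card (Grp n s j) > 2 * m" "i \<in> Grp n s j"
    using i unfolding Gbig_def by auto
  have sub: "Grp n s j \<subseteq> Gbig n s m" unfolding Gbig_def using j by auto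
  have sp: "sigmin n s > 0" by (rule sigmin_pos[OF n1 pos])
  have rat: "s i \<le> 2 * s k" if k: "k \<in> Grp n s j" for k
  proof -
    have "s i / sigmin n s < 2 ^ j" using j(3) unfolding Grp_def by auto
    then have a: "s i < 2 ^ j * sigmin n s" using sp by (simp add: pos_divide_less_eq)
    have "2 ^ (j - 1) \<le> s k / sigmin n s" using k unfolding Grp_def by auto
    then have b: "2 ^ (j - 1) * sigmin n s \<le> s k" using sp by (simp add: pos_le_divide_eq)
    have "(2::real) ^ j = 2 * 2 ^ (j - 1)" proof -
      have "j = Suc (j - 1)" using j(1) by simp
      then show ?thesis by (metis power_Suc)
    qed
    then show ?thesis using a b by simp
  qed
  show ?thesis using sub j rat by blast
qed

lemma objective_ge:
  assumes nn: "\<And>F. \<eta> F \<ge> 0" and pos: "\<And>i. i \<in> {1..n} \<Longrightarrow> s i > 0" and U: "U \<subseteq> {1..n}"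
  shows "objective n m s \<eta> \<ge> (\<Sum>M \<in> {M. M \<subseteq> U \<and> card M = m}.
        (\<Sum>l\<in>M. \<eta> (M - {l}) * s l) * Ent M (\<lambda>l. \<eta> (M - {l}) * s l))"
  unfolding objective_def
proof (rule sum_mono2)
  show "finite {M. M \<subseteq> {1..n} \<and> card M = m}" by (rule finite_subset[of _ "Pow {1..n}"]) auto
  show "{M. M \<subseteq> U \<and> card M = m} \<subseteq> {M. M \<subseteq> {1..n} \<and> card M = m}" using U by auto
  fix M assume M: "M \<in> {M. M \<subseteq> {1..n} \<and> card M = m} - {M. M \<subseteq> U \<and> card M = m}"
  then have MS: "M \<subseteq> {1..n}" by auto
  have finM: "finite M" using MS finite_subset by blast
  have t: "\<eta> (M - {l}) * s l \<ge> 0" if "l \<in> M" for l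
    using nn[of "M - {l}"] pos[of l] that MS by auto
  have "0 \<le> (\<Sum>l\<in>M. \<eta> (M - {l}) * s l)" by (rule sum_nonneg) (rule t)
  moreover have "0 \<le> Ent M (\<lambda>l. \<eta> (M - {l}) * s l)" by (rule Ent_nonneg[OF finM]) (rule t)
  ultimately show "0 \<le> (\<Sum>l\<in>M. \<eta> (M - {l}) * s l) * Ent M (\<lambda>l. \<eta> (M - {l}) * s l)"
    by (rule mult_nonneg_nonneg)
qed

theorem lemma6:
  fixes n m :: nat and s :: "nat \<Rightarrow> real"
  assumes "1 \<le> m" and "m \<le> n"
    and "\<And>i. i \<in> {1..n} \<Longrightarrow> s i > 0"
  shows "\<exists>\<eta>. feasible n m \<eta> \<and>
           objective n m s \<eta> \<ge> (1/3) * (\<Sum>j \<in> Gbig n s m. s j) * ln (real m)"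
proof -
  note m1 = assms(1) and mn = assms(2) and pos = assms(3)
  have n1: "1 \<le> n" using m1 mn by simp
  define U where "U = Gbig n s m"
  have Usub: "U \<subseteq> {1..n}" unfolding U_def by (rule Gbig_sub)
  have finU: "finite U" using Usub finite_subset by blast
  define FN where "FN = {F. F \<subseteq> {1..n} \<and> card F = m - 1}"
  have finFN: "finite FN" unfolding FN_def by (rule finite_subset[of _ "Pow {1..n}"]) auto
  show ?thesis
  proof (cases "U = {}")
    case True
    define \<eta> where "\<eta> F = (if F = {1..m-1} then (1::real) else 0)" for F
    have "{1..m-1} \<in> FN" unfolding FN_def using mn by auto
    then have "(\<Sum>F\<in>FN. \<eta> F) = 1" unfolding \<eta>_def using finFN by (simp add: sum.delta)
    then have feas: "feasible n m \<eta>" unfolding feasible_def FN_def \<eta>_def by auto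
    have o1: "objective n m s \<eta> \<ge> (\<Sum>M \<in> {M. M \<subseteq> {1..n} \<and> card M = m}.
        (\<Sum>l\<in>M. \<eta> (M - {l}) * s l) * Ent M (\<lambda>l. \<eta> (M - {l}) * s l))"
      by (rule objective_ge) (auto simp: \<eta>_def pos)
    have o2: "(\<Sum>M \<in> {M. M \<subseteq> {1..n} \<and> card M = m}.
        (\<Sum>l\<in>M. \<eta> (M - {l}) * s l) * Ent M (\<lambda>l. \<eta> (M - {l}) * s l)) \<ge> 0"
    proof (intro sum_nonneg)
      fix M assume M: "M \<in> {M. M \<subseteq> {1..n} \<and> card M = m}"
      then have MS: "M \<subseteq> {1..n}" by auto
      have finM: "finite M" using MS finite_subset by blast
      have t: "\<eta> (M - {l}) * s l \<ge> 0" if "l \<in> M" for l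
        using pos[of l] that MS by (auto simp: \<eta>_def)
      have "0 \<le> (\<Sum>l\<in>M. \<eta> (M - {l}) * s l)" by (rule sum_nonneg) (rule t)
      moreover have "0 \<le> Ent M (\<lambda>l. \<eta> (M - {l}) * s l)" by (rule Ent_nonneg[OF finM]) (rule t)
      ultimately show "0 \<le> (\<Sum>l\<in>M. \<eta> (M - {l}) * s l) * Ent M (\<lambda>l. \<eta> (M - {l}) * s l)"
        by (rule mult_nonneg_nonneg)
    qed
    have "objective n m s \<eta> \<ge> 0" using o1 o2 by linarith
    then show ?thesis using feas True unfolding U_def by auto
  next
    case False
    then obtain i0 where i0: "i0 \<in> U" by auto
    have posU: "\<And>x. x \<in> U \<Longrightarrow> s x > 0" using pos Usub by (meson subsetD)
    have grp: "\<And>i. i \<in> U \<Longrightarrow> \<exists>G. G \<subseteq> U \<and> i \<in> G \<and> card G > 2 * m \<and> (\<forall>k\<in>G. s i \<le> 2 * s k)"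
      unfolding U_def by (rule Gbig_grp[OF n1 pos])
    obtain G where G: "G \<subseteq> U" "card G > 2 * m" using grp[OF i0] by blast
    have "card G \<le> card U" using G(1) finU by (rule card_mono[rotated])
    then have "m - 1 \<le> card U" using G(2) by linarith
    then obtain F0 where F0: "F0 \<subseteq> U" "card F0 = m - 1" by (rule obtain_subset_with_card_n)
    define FU where "FU = {F. F \<subseteq> U \<and> card F = m - 1}"
    define MU where "MU = {M. M \<subseteq> U \<and> card M = m}"
    have finFU: "finite FU" unfolding FU_def by (rule finite_subset[of _ "Pow U"]) (use finU in auto)
    define Z where "Z = (\<Sum>F\<in>FU. prod s F)"
    have prodpos: "prod s F > 0" if "F \<subseteq> U" for F
      using that posU by (intro prod_pos) auto
    have "prod s F0 \<le> Z" unfolding Z_def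
      using F0 finFU prodpos[THEN less_imp_le] by (intro member_le_sum) (auto simp: FU_def)
    then have Zpos: "Z > 0" using prodpos[OF F0(1)] by linarith
    define \<eta> where "\<eta> F = (if F \<subseteq> U then prod s F / Z else 0)" for F
    have nn: "\<And>F. \<eta> F \<ge> 0" unfolding \<eta>_def using prodpos Zpos by (auto intro: less_imp_le)
    have "(\<Sum>F\<in>FN. \<eta> F) = (\<Sum>F\<in>{F\<in>FN. F \<subseteq> U}. prod s F / Z)"
      unfolding \<eta>_def using finFN by (simp add: sum.inter_filter)
    also have "{F\<in>FN. F \<subseteq> U} = FU" unfolding FN_def FU_def using Usub by auto
    also have "(\<Sum>F\<in>FU. prod s F / Z) = 1" using Zpos unfolding Z_def by (simp add: sum_divide_distrib[symmetric])
    finally have "(\<Sum>F\<in>FN. \<eta> F) = 1" .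
    then have feas: "feasible n m \<eta>" unfolding feasible_def FN_def using nn by auto
    have trm: "(\<Sum>l\<in>M. \<eta> (M - {l}) * s l) * Ent M (\<lambda>l. \<eta> (M - {l}) * s l)
        = real m * prod s M * (ln (real m) / Z)" if M: "M \<in> MU" for M
    proof -
      have MS: "M \<subseteq> U" and cM: "card M = m" using M by (auto simp: MU_def)
      have finM: "finite M" using MS finU finite_subset by blast
      have Mne: "M \<noteq> {}" using cM m1 by auto
      have e: "\<eta> (M - {l}) * s l = prod s M / Z" if l: "l \<in> M" for l
      proof -
        have "prod s M = s l * prod s (M - {l})" using prod.remove[OF finM l] .
        moreover have "M - {l} \<subseteq> U" using MS by auto
        ultimately show ?thesis unfolding \<eta>_def by (simp add: mult.commute)
      qed
      have "Ent M (\<lambda>l. \<eta> (M - {l}) * s l) = Ent M (\<lambda>_. prod s M / Z)"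
        using e by (rule Ent_cong)
      also have "\<dots> = ln (real m)" using Ent_const[OF finM Mne] prodpos[OF MS] Zpos cM by simp
      finally have E: "Ent M (\<lambda>l. \<eta> (M - {l}) * s l) = ln (real m)" .
      have "(\<Sum>l\<in>M. \<eta> (M - {l}) * s l) = real m * (prod s M / Z)" using e cM by simp
      then show ?thesis using E by simp
    qed
    have "objective n m s \<eta> \<ge> (\<Sum>M \<in> MU.
        (\<Sum>l\<in>M. \<eta> (M - {l}) * s l) * Ent M (\<lambda>l. \<eta> (M - {l}) * s l))"
      unfolding MU_def by (rule objective_ge[OF nn pos Usub])
    also have "(\<Sum>M \<in> MU. (\<Sum>l\<in>M. \<eta> (M - {l}) * s l) * Ent M (\<lambda>l. \<eta> (M - {l}) * s l))
        = (\<Sum>M \<in> MU. real m * prod s M) * (ln (real m) / Z)"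
      unfolding sum_distrib_right[of _ MU] using trm by (rule sum.cong[OF refl])
    finally have obj: "objective n m s \<eta> \<ge> (\<Sum>M \<in> MU. real m * prod s M) * (ln (real m) / Z)" .
    have mi: "(1/3) * Z * (\<Sum>j\<in>U. s j) \<le> (\<Sum>M \<in> MU. real m * prod s M)"
      unfolding Z_def FU_def MU_def by (rule main_ineq[OF finU m1 posU grp])
    have lnm: "ln (real m) / Z \<ge> 0" using m1 Zpos by simp
    have "(1/3) * (\<Sum>j\<in>U. s j) * ln (real m) = ((1/3) * Z * (\<Sum>j\<in>U. s j)) * (ln (real m) / Z)"
      using Zpos by simp
    also have "\<dots> \<le> (\<Sum>M \<in> MU. real m * prod s M) * (ln (real m) / Z)"
      using mi lnm by (rule mult_right_mono)
    finally have "(1/3) * (\<Sum>j\<in>U. s j) * ln (real m) \<le> objective n m s \<eta>" using obj by linarith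
    then show ?thesis using feas unfolding U_def by blast
  qed
qed

end
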